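(* Let $G,H$ be connected graphs. If $\iota(G),\iota(H)<\infty$ then $\iota(G\,\Box\,H)=\iota(G)+\iota(H)$. If $\iota(G)=\infty$ or $\iota(H)=\infty$, then $\iota(G\,\Box\,H)=\infty$.
   Context: For a connected graph $G$ on vertices $v_1,\dots,v_n$, its distance matrix is $D=(d(v_i,v_j))_{i,j=1}^n$, where $d$ is the shortest-path distance; $\vec 1$ denotes the all-ones vector. $G$ is distance exceptional if $D\vec x=\vec 1$ has no solution. A curvature potential is a vector $\vec x$ with $D\vec x=\vec 1$. Curvature index $\iota(G)\in\mathbb{R}\cup\{\infty\}$: if $G$ is distance exceptional or has a curvature potential $\vec x$ with $\vec 1^\top\vec x\neq0$, then $\iota(G)$ is the unique real number with $\{D\vec x:\vec 1^\top\vec x=1\}\cap\mathbb{R}\vec 1=\{\iota(G)\vec 1\}$ (this intersection is a single point); otherwise (curvature potentials exist and all have $\vec 1^\top\vec x=0$) $\iota(G)=\infty$. The Cartesian product $G\,\Box\,H$ has vertex set $V(G)\times V(H)$, with $(u,v)\sim(u',v')$ iff either $u=u'$ and $\{v,v'\}\in E(H)$, or $v=v'$ and $\{u,u'\}\in E(G)$. *)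

theory Defs
  imports Main "HOL-Library.Extended_Real"
begin

definition simple_graph :: "'a set \<Rightarrow> ('a \<Rightarrow> 'a \<Rightarrow> bool) \<Rightarrow> bool" where
  "simple_graph V E \<longleftrightarrow> finite V \<and> V \<noteq> {} \<and>
     (\<forall>u v. E u v \<longrightarrow> u \<in> V \<and> v \<in> V) \<and>
     (\<forall>u v. E u v \<longrightarrow> E v u) \<and> (\<forall>u. \<not> E u u)"

definition walk_of_length :: "('a \<Rightarrow> 'a \<Rightarrow> bool) \<Rightarrow> 'a \<Rightarrow> 'a \<Rightarrow> nat \<Rightarrow> bool" where
  "walk_of_length E u v n \<longleftrightarrow> (\<exists>xs. length xs = Suc n \<and> xs ! 0 = u \<and> xs ! n = v \<and>
      (\<forall>i<n. E (xs ! i) (xs ! Suc i)))"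

definition connected_graph :: "'a set \<Rightarrow> ('a \<Rightarrow> 'a \<Rightarrow> bool) \<Rightarrow> bool" where
  "connected_graph V E \<longleftrightarrow> simple_graph V E \<and>
     (\<forall>u\<in>V. \<forall>v\<in>V. \<exists>n. walk_of_length E u v n)"

definition gdist :: "('a \<Rightarrow> 'a \<Rightarrow> bool) \<Rightarrow> 'a \<Rightarrow> 'a \<Rightarrow> nat" where
  "gdist E u v = (LEAST n. walk_of_length E u v n)"

definition dist_mult :: "'a set \<Rightarrow> ('a \<Rightarrow> 'a \<Rightarrow> bool) \<Rightarrow> ('a \<Rightarrow> real) \<Rightarrow> 'a \<Rightarrow> real" where
  "dist_mult V E x v = (\<Sum>w\<in>V. real (gdist E v w) * x w)"

definition curvature_potential :: "'a set \<Rightarrow> ('a \<Rightarrow> 'a \<Rightarrow> bool) \<Rightarrow> ('a \<Rightarrow> real) \<Rightarrow> bool" where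
  "curvature_potential V E x \<longleftrightarrow> (\<forall>v\<in>V. dist_mult V E x v = 1)"

definition distance_exceptional :: "'a set \<Rightarrow> ('a \<Rightarrow> 'a \<Rightarrow> bool) \<Rightarrow> bool" where
  "distance_exceptional V E \<longleftrightarrow> \<not> (\<exists>x. curvature_potential V E x)"

definition curvature_index :: "'a set \<Rightarrow> ('a \<Rightarrow> 'a \<Rightarrow> bool) \<Rightarrow> ereal" where
  "curvature_index V E =
     (if distance_exceptional V E \<or> (\<exists>x. curvature_potential V E x \<and> sum x V \<noteq> 0)
      then ereal (THE c. \<exists>x. sum x V = 1 \<and> (\<forall>v\<in>V. dist_mult V E x v = c))
      else \<infinity>)"

definition cart_edges :: "'a set \<Rightarrow> ('a \<Rightarrow> 'a \<Rightarrow> bool) \<Rightarrow> 'b set \<Rightarrow> ('b \<Rightarrow> 'b \<Rightarrow> bool)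
    \<Rightarrow> ('a \<times> 'b) \<Rightarrow> ('a \<times> 'b) \<Rightarrow> bool" where
  "cart_edges V1 E1 V2 E2 p q \<longleftrightarrow>
     (fst p = fst q \<and> fst p \<in> V1 \<and> E2 (snd p) (snd q)) \<or>
     (snd p = snd q \<and> snd p \<in> V2 \<and> E1 (fst p) (fst q))"

end

theory Submission
  imports Defs
begin

lemma walk0: "walk_of_length E u v 0 \<longleftrightarrow> u = v"
  unfolding walk_of_length_def
proof
  assume "\<exists>xs. length xs = Suc 0 \<and> xs ! 0 = u \<and> xs ! 0 = v \<and> (\<forall>i<0. E (xs ! i) (xs ! Suc i))"
  then show "u = v" by auto
next
  assume "u = v" then show "\<exists>xs. length xs = Suc 0 \<and> xs ! 0 = u \<and> xs ! 0 = v \<and> (\<forall>i<0. E (xs ! i) (xs ! Suc i))"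
    by (intro exI[of _ "[u]"]) auto
qed

lemma walkSuc: "walk_of_length E u v (Suc n) \<longleftrightarrow> (\<exists>w. E u w \<and> walk_of_length E w v n)"
proof
  assume "walk_of_length E u v (Suc n)"
  then obtain xs where xs: "length xs = Suc (Suc n)" "xs ! 0 = u" "xs ! Suc n = v"
    "\<forall>i<Suc n. E (xs ! i) (xs ! Suc i)" unfolding walk_of_length_def by blast
  have "E u (xs ! 1)" using xs(2,4) by force
  moreover have "walk_of_length E (xs ! 1) v n"
    unfolding walk_of_length_def
    apply (intro exI[of _ "tl xs"])
    using xs by (auto simp: nth_tl)
  ultimately show "\<exists>w. E u w \<and> walk_of_length E w v n" by blast
next
  assume "\<exists>w. E u w \<and> walk_of_length E w v n"
  then obtain w xs where w: "E u w" and xs: "length xs = Suc n" "xs ! 0 = w" "xs ! n = v"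
    "\<forall>i<n. E (xs ! i) (xs ! Suc i)" unfolding walk_of_length_def by blast
  show "walk_of_length E u v (Suc n)"
    unfolding walk_of_length_def
  proof (intro exI[of _ "u # xs"] conjI allI impI)
    fix i assume "i < Suc n"
    then show "E ((u # xs) ! i) ((u # xs) ! Suc i)"
      using w xs by (cases i) auto
  qed (use xs in auto)
qed

lemma walk_concat: "walk_of_length E u w a \<Longrightarrow> walk_of_length E w v b \<Longrightarrow> walk_of_length E u v (a + b)"
  by (induction a arbitrary: u) (auto simp: walk0 walkSuc)

lemma walk_rev:
  assumes sym: "\<forall>u v. E u v \<longrightarrow> E v u"
  shows "walk_of_length E u v n \<Longrightarrow> walk_of_length E v u n"
proof (induction n arbitrary: u)
  case 0 then show ?case by (simp add: walk0)
next
  case (Suc n)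
  then obtain w where w: "E u w" "walk_of_length E w v n" by (auto simp: walkSuc)
  have "walk_of_length E v w n" using Suc.IH w(2) by blast
  moreover have "walk_of_length E w u 1" using w(1) sym by (simp add: walkSuc walk0)
  ultimately show ?case using walk_concat by fastforce
qed

lemma gdist_sym:
  assumes "connected_graph V E" "u \<in> V" "v \<in> V"
  shows "gdist E u v = gdist E v u"
proof -
  have sym: "\<forall>u v. E u v \<longrightarrow> E v u" using assms(1) unfolding connected_graph_def simple_graph_def by blast
  have eq: "walk_of_length E u v n \<longleftrightarrow> walk_of_length E v u n" for n
    using walk_rev[OF sym] by blast
  show ?thesis unfolding gdist_def eq ..
qed

lemma walk_prod1:
  assumes "v \<in> V2"
  shows "walk_of_length E1 u u' a \<Longrightarrow> walk_of_length (cart_edges V1 E1 V2 E2) (u, v) (u', v) a"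
proof (induction a arbitrary: u)
  case 0 then show ?case by (simp add: walk0)
next
  case (Suc a)
  then obtain w where "E1 u w" "walk_of_length E1 w u' a" by (auto simp: walkSuc)
  then show ?case using Suc.IH assms by (auto simp: walkSuc cart_edges_def)
qed

lemma walk_prod2:
  assumes "u \<in> V1"
  shows "walk_of_length E2 v v' a \<Longrightarrow> walk_of_length (cart_edges V1 E1 V2 E2) (u, v) (u, v') a"
proof (induction a arbitrary: v)
  case 0 then show ?case by (simp add: walk0)
next
  case (Suc a)
  then obtain w where "E2 v w" "walk_of_length E2 w v' a" by (auto simp: walkSuc)
  then show ?case using Suc.IH assms by (auto simp: walkSuc cart_edges_def)
qed

lemma walk_proj:
  "walk_of_length (cart_edges V1 E1 V2 E2) p q n \<Longrightarrow>
    \<exists>a b. a + b = n \<and> walk_of_length E1 (fst p) (fst q) a \<and> walk_of_length E2 (snd p) (snd q) b"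
proof (induction n arbitrary: p)
  case 0 then show ?case by (auto simp: walk0)
next
  case (Suc n)
  then obtain w where w: "cart_edges V1 E1 V2 E2 p w" "walk_of_length (cart_edges V1 E1 V2 E2) w q n"
    by (auto simp: walkSuc)
  then obtain a b where ab: "a + b = n" "walk_of_length E1 (fst w) (fst q) a" "walk_of_length E2 (snd w) (snd q) b"
    using Suc.IH by blast
  from w(1) show ?case
    unfolding cart_edges_def
  proof (elim disjE conjE)
    assume "fst p = fst w" "E2 (snd p) (snd w)"
    then show ?thesis using ab
      by (intro exI[of _ a] exI[of _ "Suc b"]) (auto simp: walkSuc)
  next
    assume "snd p = snd w" "E1 (fst p) (fst w)"
    then show ?thesis using ab
      by (intro exI[of _ "Suc a"] exI[of _ b]) (auto simp: walkSuc)
  qed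
qed

lemma gdist_prod:
  assumes "connected_graph V1 E1" "connected_graph V2 E2"
    "u \<in> V1" "u' \<in> V1" "v \<in> V2" "v' \<in> V2"
  shows "gdist (cart_edges V1 E1 V2 E2) (u, v) (u', v') = gdist E1 u u' + gdist E2 v v'"
proof -
  obtain a0 where a0: "walk_of_length E1 u u' a0" using assms unfolding connected_graph_def by blast
  obtain b0 where b0: "walk_of_length E2 v v' b0" using assms unfolding connected_graph_def by blast
  have w1: "walk_of_length E1 u u' (gdist E1 u u')" unfolding gdist_def using a0 by (rule LeastI)
  have w2: "walk_of_length E2 v v' (gdist E2 v v')" unfolding gdist_def using b0 by (rule LeastI)
  show ?thesis unfolding gdist_def[of "cart_edges V1 E1 V2 E2"]
  proof (rule Least_equality)
    show "walk_of_length (cart_edges V1 E1 V2 E2) (u, v) (u', v') (gdist E1 u u' + gdist E2 v v')"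
      using walk_concat[OF walk_prod1[OF assms(5) w1] walk_prod2[OF assms(4) w2]] .
  next
    fix n assume "walk_of_length (cart_edges V1 E1 V2 E2) (u, v) (u', v') n"
    then obtain a b where "a + b = n" "walk_of_length E1 u u' a" "walk_of_length E2 v v' b"
      using walk_proj by fastforce
    then show "gdist E1 u u' + gdist E2 v v' \<le> n"
      unfolding gdist_def by (metis Least_le add_mono)
  qed
qed

lemma fredholm:
  fixes A :: "'r \<Rightarrow> 'c \<Rightarrow> real"
  assumes "finite R" "finite S"
  shows "(\<exists>x. \<forall>i\<in>R. (\<Sum>j\<in>S. A i j * x j) = b i) \<or>
         (\<exists>y. (\<forall>j\<in>S. (\<Sum>i\<in>R. y i * A i j) = 0) \<and> (\<Sum>i\<in>R. y i * b i) = 1)"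
  using assms(2)
proof (induction S arbitrary: b rule: finite_induct)
  case empty
  show ?case
  proof (cases "\<forall>i\<in>R. b i = 0")
    case True then show ?thesis by auto
  next
    case False
    then obtain i0 where i0: "i0 \<in> R" "b i0 \<noteq> 0" by blast
    define N where "N = (\<Sum>i\<in>R. b i * b i)"
    have "N \<ge> b i0 * b i0" unfolding N_def
      using member_le_sum[of i0 R "\<lambda>i. b i * b i"] i0 assms(1) by auto
    moreover have "b i0 * b i0 > 0" using i0 by (auto simp: zero_less_mult_iff linorder_neq_iff)
    ultimately have N: "N > 0" by linarith
    have "(\<Sum>i\<in>R. b i / N * b i) = N / N"
      unfolding N_def by (simp add: sum_divide_distrib[symmetric] algebra_simps)
    then show ?thesis using N by (intro disjI2 exI[of _ "\<lambda>i. b i / N"]) auto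
  qed
next
  case (insert c S)
  note IH = insert.IH
  show ?case
  proof (cases "\<exists>z. \<forall>i\<in>R. (\<Sum>j\<in>S. A i j * z j) = A i c")
    case True
    then obtain z where z: "\<forall>i\<in>R. (\<Sum>j\<in>S. A i j * z j) = A i c" by blast
    from IH[of b] show ?thesis
    proof
      assume "\<exists>x. \<forall>i\<in>R. (\<Sum>j\<in>S. A i j * x j) = b i"
      then obtain x where x: "\<forall>i\<in>R. (\<Sum>j\<in>S. A i j * x j) = b i" by blast
      have "\<forall>i\<in>R. (\<Sum>j\<in>insert c S. A i j * (x(c := 0)) j) = b i"
      proof
        fix i assume "i \<in> R"
        have "(\<Sum>j\<in>S. A i j * (x(c := 0)) j) = (\<Sum>j\<in>S. A i j * x j)"
          using insert.hyps(2) by (intro sum.cong) auto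
        then show "(\<Sum>j\<in>insert c S. A i j * (x(c := 0)) j) = b i"
          using x \<open>i \<in> R\<close> insert.hyps by simp
      qed
      then show ?thesis by blast
    next
      assume "\<exists>y. (\<forall>j\<in>S. (\<Sum>i\<in>R. y i * A i j) = 0) \<and> (\<Sum>i\<in>R. y i * b i) = 1"
      then obtain y where y: "\<forall>j\<in>S. (\<Sum>i\<in>R. y i * A i j) = 0" "(\<Sum>i\<in>R. y i * b i) = 1" by blast
      have "(\<Sum>i\<in>R. y i * A i c) = (\<Sum>i\<in>R. y i * (\<Sum>j\<in>S. A i j * z j))"
        using z by (intro sum.cong) auto
      also have "\<dots> = (\<Sum>j\<in>S. z j * (\<Sum>i\<in>R. y i * A i j))"
        by (simp add: sum_distrib_left sum_distrib_right sum.swap[of _ R S] algebra_simps)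
      also have "\<dots> = 0" using y(1) by simp
      finally show ?thesis using y insert.hyps by (intro disjI2 exI[of _ y]) auto
    qed
  next
    case False
    with IH[of "\<lambda>i. A i c"] obtain y1 where y1: "\<forall>j\<in>S. (\<Sum>i\<in>R. y1 i * A i j) = 0"
      "(\<Sum>i\<in>R. y1 i * A i c) = 1" by blast
    define s where "s = (\<Sum>i\<in>R. y1 i * b i)"
    from IH[of "\<lambda>i. b i - s * A i c"] show ?thesis
    proof
      assume "\<exists>x. \<forall>i\<in>R. (\<Sum>j\<in>S. A i j * x j) = b i - s * A i c"
      then obtain x where x: "\<forall>i\<in>R. (\<Sum>j\<in>S. A i j * x j) = b i - s * A i c" by blast
      have "\<forall>i\<in>R. (\<Sum>j\<in>insert c S. A i j * (x(c := s)) j) = b i"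
      proof
        fix i assume "i \<in> R"
        have "(\<Sum>j\<in>S. A i j * (x(c := s)) j) = (\<Sum>j\<in>S. A i j * x j)"
          using insert.hyps(2) by (intro sum.cong) auto
        then show "(\<Sum>j\<in>insert c S. A i j * (x(c := s)) j) = b i"
          using x \<open>i \<in> R\<close> insert.hyps by simp
      qed
      then show ?thesis by blast
    next
      assume "\<exists>y. (\<forall>j\<in>S. (\<Sum>i\<in>R. y i * A i j) = 0) \<and> (\<Sum>i\<in>R. y i * (b i - s * A i c)) = 1"
      then obtain y0 where y0: "\<forall>j\<in>S. (\<Sum>i\<in>R. y0 i * A i j) = 0"
        "(\<Sum>i\<in>R. y0 i * (b i - s * A i c)) = 1" by blast
      define t where "t = (\<Sum>i\<in>R. y0 i * A i c)"
      define y where "y = (\<lambda>i. y0 i - t * y1 i)"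
      have ylin: "(\<Sum>i\<in>R. y i * f i) = (\<Sum>i\<in>R. y0 i * f i) - t * (\<Sum>i\<in>R. y1 i * f i)" for f
        unfolding y_def by (simp add: algebra_simps sum_subtractf sum_distrib_left)
      have "\<forall>j\<in>insert c S. (\<Sum>i\<in>R. y i * A i j) = 0"
        using ylin y0(1) y1 t_def by auto
      moreover have "(\<Sum>i\<in>R. y i * b i) = 1"
      proof -
        have "(\<Sum>i\<in>R. y0 i * (b i - s * A i c)) = (\<Sum>i\<in>R. y0 i * b i) - s * t"
          unfolding t_def by (simp add: algebra_simps sum_subtractf sum_distrib_left)
        then show ?thesis using ylin[of b] y0(2) s_def by (simp add: mult.commute)
      qed
      ultimately show ?thesis by blast
    qed
  qed
qed

definition symd :: "'a set \<Rightarrow> ('a \<Rightarrow> 'a \<Rightarrow> bool) \<Rightarrow> bool" where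
  "symd V E \<longleftrightarrow> (\<forall>u\<in>V. \<forall>v\<in>V. gdist E u v = gdist E v u)"

lemma bil:
  assumes "symd V E"
  shows "(\<Sum>v\<in>V. y v * dist_mult V E x v) = (\<Sum>v\<in>V. x v * dist_mult V E y v)"
proof -
  have "(\<Sum>v\<in>V. x v * dist_mult V E y v) = (\<Sum>v\<in>V. \<Sum>w\<in>V. x v * (real (gdist E v w) * y w))"
    unfolding dist_mult_def by (simp add: sum_distrib_left)
  also have "\<dots> = (\<Sum>w\<in>V. \<Sum>v\<in>V. x v * (real (gdist E v w) * y w))" by (rule sum.swap)
  also have "\<dots> = (\<Sum>w\<in>V. \<Sum>v\<in>V. y w * (real (gdist E w v) * x v))"
    using assms unfolding symd_def by (intro sum.cong refl) (auto simp: algebra_simps)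
  also have "\<dots> = (\<Sum>v\<in>V. y v * dist_mult V E x v)"
    unfolding dist_mult_def by (simp add: sum_distrib_left)
  finally show ?thesis by simp
qed

lemma ci_eq:
  assumes sym: "symd V E" and z: "sum z V = 1" "\<forall>v\<in>V. dist_mult V E z v = c"
  shows "curvature_index V E = ereal c"
proof -
  have uniq: "c' = c" if "sum y V = 1" "\<forall>v\<in>V. dist_mult V E y v = c'" for y c'
  proof -
    have "c' = (\<Sum>v\<in>V. z v * dist_mult V E y v)" using that z by (simp add: sum_distrib_right[symmetric])
    also have "\<dots> = (\<Sum>v\<in>V. y v * dist_mult V E z v)" by (rule bil[OF sym])
    also have "\<dots> = c" using that z by (simp add: sum_distrib_right[symmetric])
    finally show ?thesis .
  qed
  have br: "distance_exceptional V E \<or> (\<exists>x. curvature_potential V E x \<and> sum x V \<noteq> 0)"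
  proof (rule ccontr)
    assume "\<not> ?thesis"
    then obtain w where w: "curvature_potential V E w" "sum w V = 0"
      unfolding distance_exceptional_def by blast
    have "1 = (\<Sum>v\<in>V. z v * dist_mult V E w v)" using w z unfolding curvature_potential_def by simp
    also have "\<dots> = (\<Sum>v\<in>V. w v * dist_mult V E z v)" by (rule bil[OF sym])
    also have "\<dots> = c * sum w V" using z by (simp add: sum_distrib_left mult.commute)
    finally show False using w by simp
  qed
  have "(THE c. \<exists>x. sum x V = 1 \<and> (\<forall>v\<in>V. dist_mult V E x v = c)) = c"
    using z uniq by (intro the_equality) blast+
  then show ?thesis using br unfolding curvature_index_def by simp
qed

lemma ci_witness:
  assumes fin: "finite V" and sym: "symd V E" and ne: "curvature_index V E \<noteq> \<infinity>"
  shows "\<exists>x c. sum x V = 1 \<and> (\<forall>v\<in>V. dist_mult V E x v = c) \<and> curvature_index V E = ereal c"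
proof -
  have "\<exists>x c. sum x V = 1 \<and> (\<forall>v\<in>V. dist_mult V E x v = c)"
  proof -
    have br: "distance_exceptional V E \<or> (\<exists>x. curvature_potential V E x \<and> sum x V \<noteq> 0)"
      using ne unfolding curvature_index_def by (auto split: if_splits)
    then show ?thesis
    proof
      assume "\<exists>x. curvature_potential V E x \<and> sum x V \<noteq> 0"
      then obtain x where x: "curvature_potential V E x" "sum x V \<noteq> 0" by blast
      define s where "s = sum x V"
      have "sum (\<lambda>v. x v / s) V = 1" using x s_def by (simp add: sum_divide_distrib[symmetric])
      moreover have "\<forall>v\<in>V. dist_mult V E (\<lambda>v. x v / s) v = 1 / s"
        using x unfolding curvature_potential_def dist_mult_def
        by (simp add: sum_divide_distrib[symmetric])
      ultimately show ?thesis by blast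
    next
      assume ex: "distance_exceptional V E"
      from fredholm[OF fin fin, of "\<lambda>i j. real (gdist E i j)" "\<lambda>_. 1"]
      show ?thesis
      proof
        assume "\<exists>x. \<forall>i\<in>V. (\<Sum>j\<in>V. real (gdist E i j) * x j) = 1"
        then have "\<exists>x. curvature_potential V E x"
          unfolding curvature_potential_def dist_mult_def by blast
        then show ?thesis using ex unfolding distance_exceptional_def by blast
      next
        assume "\<exists>y. (\<forall>j\<in>V. (\<Sum>i\<in>V. y i * real (gdist E i j)) = 0) \<and> (\<Sum>i\<in>V. y i * 1) = 1"
        then obtain y where y: "\<forall>j\<in>V. (\<Sum>i\<in>V. y i * real (gdist E i j)) = 0" "sum y V = 1" by auto
        have "\<forall>v\<in>V. dist_mult V E y v = 0"
        proof
          fix v assume v: "v \<in> V"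
          have "dist_mult V E y v = (\<Sum>i\<in>V. y i * real (gdist E i v))"
            unfolding dist_mult_def using sym v unfolding symd_def
            by (intro sum.cong refl) (auto simp: mult.commute)
          then show "dist_mult V E y v = 0" using y v by simp
        qed
        then show ?thesis using y by blast
      qed
    qed
  qed
  then obtain x c where "sum x V = 1" "\<forall>v\<in>V. dist_mult V E x v = c" by blast
  then show ?thesis using ci_eq[OF sym] by blast
qed

lemma ci_inf:
  assumes sym: "symd V E" and "curvature_index V E = \<infinity>"
  shows "\<not> (\<exists>x c. sum x V = 1 \<and> (\<forall>v\<in>V. dist_mult V E x v = c))"
  using ci_eq[OF sym] assms(2) by force

lemma symd_conn: "connected_graph V E \<Longrightarrow> symd V E"
  unfolding symd_def by (intro ballI) (rule gdist_sym)

lemma prod_decomp: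
  assumes c1: "connected_graph V1 E1" and c2: "connected_graph V2 E2" and u: "u \<in> V1" and v: "v \<in> V2"
  shows "dist_mult (V1 \<times> V2) (cart_edges V1 E1 V2 E2) z (u, v) =
     dist_mult V1 E1 (\<lambda>a. \<Sum>b\<in>V2. z (a, b)) u + dist_mult V2 E2 (\<lambda>b. \<Sum>a\<in>V1. z (a, b)) v"
proof -
  have "dist_mult (V1 \<times> V2) (cart_edges V1 E1 V2 E2) z (u, v) =
      (\<Sum>(a,b)\<in>V1 \<times> V2. (real (gdist E1 u a) + real (gdist E2 v b)) * z (a, b))"
    unfolding dist_mult_def
  proof (intro sum.cong refl)
    fix p assume "p \<in> V1 \<times> V2"
    then obtain a b where ab: "p = (a, b)" "a \<in> V1" "b \<in> V2" by blast
    have "gdist (cart_edges V1 E1 V2 E2) (u, v) (a, b) = gdist E1 u a + gdist E2 v b"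
      using gdist_prod[OF c1 c2 u ab(2) v ab(3)] .
    then show "real (gdist (cart_edges V1 E1 V2 E2) (u, v) p) * z p =
      (case p of (a, b) \<Rightarrow> (real (gdist E1 u a) + real (gdist E2 v b)) * z (a, b))"
      using ab(1) by simp
  qed
  also have "\<dots> = (\<Sum>a\<in>V1. \<Sum>b\<in>V2. (real (gdist E1 u a) + real (gdist E2 v b)) * z (a, b))"
    by (simp add: sum.cartesian_product)
  also have "\<dots> = (\<Sum>a\<in>V1. \<Sum>b\<in>V2. real (gdist E1 u a) * z (a, b)) +
                  (\<Sum>a\<in>V1. \<Sum>b\<in>V2. real (gdist E2 v b) * z (a, b))"
    by (simp add: distrib_right sum.distrib)
  also have "(\<Sum>a\<in>V1. \<Sum>b\<in>V2. real (gdist E1 u a) * z (a, b)) = dist_mult V1 E1 (\<lambda>a. \<Sum>b\<in>V2. z (a, b)) u"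
    unfolding dist_mult_def by (simp add: sum_distrib_left)
  also have "(\<Sum>a\<in>V1. \<Sum>b\<in>V2. real (gdist E2 v b) * z (a, b)) = dist_mult V2 E2 (\<lambda>b. \<Sum>a\<in>V1. z (a, b)) v"
    unfolding dist_mult_def by (simp add: sum_distrib_left sum.swap[of _ V1 V2])
  finally show ?thesis .
qed

theorem theorem3p4:
  fixes V1 :: "'a set" and E1 :: "'a \<Rightarrow> 'a \<Rightarrow> bool"
    and V2 :: "'b set" and E2 :: "'b \<Rightarrow> 'b \<Rightarrow> bool"
  assumes "connected_graph V1 E1" and "connected_graph V2 E2"
  shows "(curvature_index V1 E1 < \<infinity> \<and> curvature_index V2 E2 < \<infinity> \<longrightarrow>
            curvature_index (V1 \<times> V2) (cart_edges V1 E1 V2 E2)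
              = curvature_index V1 E1 + curvature_index V2 E2)
       \<and> (curvature_index V1 E1 = \<infinity> \<or> curvature_index V2 E2 = \<infinity> \<longrightarrow>
            curvature_index (V1 \<times> V2) (cart_edges V1 E1 V2 E2) = \<infinity>)"
proof -
  note c1 = assms(1) and c2 = assms(2)
  have fin1: "finite V1" and ne1: "V1 \<noteq> {}" using c1 unfolding connected_graph_def simple_graph_def by auto
  have fin2: "finite V2" and ne2: "V2 \<noteq> {}" using c2 unfolding connected_graph_def simple_graph_def by auto
  have s1: "symd V1 E1" and s2: "symd V2 E2" using c1 c2 by (auto intro: symd_conn)
  define P where "P = V1 \<times> V2"
  define EP where "EP = cart_edges V1 E1 V2 E2"
  have finP: "finite P" unfolding P_def using fin1 fin2 by simp
  have sP: "symd P EP"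
    unfolding symd_def P_def EP_def
  proof (intro ballI)
    fix p q assume "p \<in> V1 \<times> V2" "q \<in> V1 \<times> V2"
    then obtain a b a' b' where ab: "p = (a,b)" "q = (a',b')" "a\<in>V1" "b\<in>V2" "a'\<in>V1" "b'\<in>V2" by auto
    have e1: "gdist E1 a a' = gdist E1 a' a" using gdist_sym[OF c1] ab by blast
    have e2: "gdist E2 b b' = gdist E2 b' b" using gdist_sym[OF c2] ab by blast
    show "gdist (cart_edges V1 E1 V2 E2) p q = gdist (cart_edges V1 E1 V2 E2) q p"
      using ab by (simp add: gdist_prod[OF c1 c2] e1 e2)
  qed
  have dec: "\<And>z u v. u \<in> V1 \<Longrightarrow> v \<in> V2 \<Longrightarrow> dist_mult P EP z (u, v) =
     dist_mult V1 E1 (\<lambda>a. \<Sum>b\<in>V2. z (a, b)) u + dist_mult V2 E2 (\<lambda>b. \<Sum>a\<in>V1. z (a, b)) v"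
    unfolding P_def EP_def using prod_decomp[OF c1 c2] by blast
  have sumP: "sum z P = (\<Sum>a\<in>V1. \<Sum>b\<in>V2. z (a, b))"
    for z :: "'a \<times> 'b \<Rightarrow> real"
    unfolding P_def by (simp add: sum.cartesian_product)
  have part1: "curvature_index P EP = curvature_index V1 E1 + curvature_index V2 E2"
    if h: "curvature_index V1 E1 \<noteq> \<infinity>" "curvature_index V2 E2 \<noteq> \<infinity>"
  proof -
    obtain x a where x: "sum x V1 = 1" "\<forall>v\<in>V1. dist_mult V1 E1 x v = a" "curvature_index V1 E1 = ereal a"
      using ci_witness[OF fin1 s1 h(1)] by blast
    obtain y b where y: "sum y V2 = 1" "\<forall>v\<in>V2. dist_mult V2 E2 y v = b" "curvature_index V2 E2 = ereal b"
      using ci_witness[OF fin2 s2 h(2)] by blast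
    define z where "z = (\<lambda>p. x (fst p) * y (snd p))"
    have m1: "(\<lambda>u. \<Sum>v\<in>V2. z (u, v)) = x" unfolding z_def using y(1) by (simp add: sum_distrib_left[symmetric])
    have m2: "(\<lambda>v. \<Sum>u\<in>V1. z (u, v)) = y" unfolding z_def using x(1) by (simp add: sum_distrib_right[symmetric])
    have "sum z P = 1" unfolding sumP z_def using x(1) y(1)
      by (simp add: sum_distrib_left[symmetric] sum_distrib_right[symmetric])
    moreover have "\<forall>p\<in>P. dist_mult P EP z p = a + b"
      unfolding P_def using dec[of _ _ z] m1 m2 x y by (auto simp: P_def)
    ultimately have "curvature_index P EP = ereal (a + b)" using ci_eq[OF sP] by blast
    then show ?thesis using x(3) y(3) by simp
  qed
  have part2: "curvature_index P EP = \<infinity>"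
    if h: "curvature_index V1 E1 = \<infinity> \<or> curvature_index V2 E2 = \<infinity>"
  proof (rule ccontr)
    assume "curvature_index P EP \<noteq> \<infinity>"
    then obtain z c where z: "sum z P = 1" "\<forall>p\<in>P. dist_mult P EP z p = c"
      using ci_witness[OF finP sP] by blast
    define m1 where "m1 = (\<lambda>a. \<Sum>b\<in>V2. z (a, b))"
    define m2 where "m2 = (\<lambda>b. \<Sum>a\<in>V1. z (a, b))"
    have d: "dist_mult V1 E1 m1 u + dist_mult V2 E2 m2 v = c" if "u \<in> V1" "v \<in> V2" for u v
      using dec[OF that, of z] z(2) that unfolding m1_def m2_def P_def by auto
    have sm1: "sum m1 V1 = 1" using z(1) unfolding sumP m1_def .
    have sm2: "sum m2 V2 = 1" using z(1) unfolding sumP m2_def by (simp add: sum.swap[of _ V1 V2])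
    from ne1 obtain u0 where u0: "u0 \<in> V1" by blast
    from ne2 obtain v0 where v0: "v0 \<in> V2" by blast
    from h show False
    proof
      assume "curvature_index V1 E1 = \<infinity>"
      moreover have "\<forall>u\<in>V1. dist_mult V1 E1 m1 u = c - dist_mult V2 E2 m2 v0"
        using d v0 by (auto simp: algebra_simps)
      ultimately show False using ci_inf[OF s1] sm1 by blast
    next
      assume "curvature_index V2 E2 = \<infinity>"
      moreover have "\<forall>v\<in>V2. dist_mult V2 E2 m2 v = c - dist_mult V1 E1 m1 u0"
        using d u0 by (auto simp: algebra_simps)
      ultimately show False using ci_inf[OF s2] sm2 by blast
    qed
  qed
  show ?thesis
    using part1 part2 unfolding P_def EP_def by auto
qed

end
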